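(* Let $f:\{0,\tfrac12,1\}^V\to\mathbb{R}$ be a bisubmodular function and let $\mathcal{A}\subseteq\{0,\tfrac12,1\}^V$ be its set of minimising assignments. Then the set $\mathcal{A}\cap\{0,1\}^V$ of integral global minimisers of $f$ can be modelled as the set of solutions to a (crisp) 2-CNF formula on $V$.
   Context: The operations $\sqcap,\sqcup$ on $\{0,\tfrac12,1\}$ are: $x\sqcap x=x\sqcup x=x$; $0\sqcap1=0\sqcup1=\tfrac12$; for $a\in\{0,1\}$, $a\sqcap\tfrac12=\tfrac12$ and $a\sqcup\tfrac12=a$ (and symmetrically). $f$ is bisubmodular if $f(A)+f(B)\ge f(A\sqcap B)+f(A\sqcup B)$ for all $A,B\in\{0,\tfrac12,1\}^V$, operations coordinatewise. *)

theory Defs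
  imports Complex_Main
begin

text \<open>The three-element domain {0, 1/2, 1}.\<close>
datatype tri = T0 | Th | T1

fun tmeet :: "tri \<Rightarrow> tri \<Rightarrow> tri" where
  "tmeet T0 T0 = T0"
| "tmeet T1 T1 = T1"
| "tmeet _ _ = Th"

fun tjoin :: "tri \<Rightarrow> tri \<Rightarrow> tri" where
  "tjoin T0 T0 = T0"
| "tjoin T1 T1 = T1"
| "tjoin T0 T1 = Th"
| "tjoin T1 T0 = Th"
| "tjoin Th y = y"
| "tjoin x Th = x"

definition bisubmodular :: "(('v \<Rightarrow> tri) \<Rightarrow> real) \<Rightarrow> bool" where
  "bisubmodular f \<longleftrightarrow>
     (\<forall>A B. f A + f B \<ge> f (\<lambda>v. tmeet (A v) (B v)) + f (\<lambda>v. tjoin (A v) (B v)))"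

definition minimisers :: "(('v \<Rightarrow> tri) \<Rightarrow> real) \<Rightarrow> ('v \<Rightarrow> tri) set" where
  "minimisers f = {A. \<forall>B. f A \<le> f B}"

definition tri_of_bool :: "bool \<Rightarrow> tri" where
  "tri_of_bool b = (if b then T1 else T0)"

text \<open>A literal is a pair (variable, polarity); a clause is a set of literals;
  a 2-CNF formula is a set of clauses each with at most two literals.\<close>
definition sat_clause :: "('v \<Rightarrow> bool) \<Rightarrow> ('v \<times> bool) set \<Rightarrow> bool" where
  "sat_clause \<sigma> C \<longleftrightarrow> (\<exists>(x, b) \<in> C. \<sigma> x = b)"

definition is_2cnf :: "('v \<times> bool) set set \<Rightarrow> bool" where
  "is_2cnf F \<longleftrightarrow> finite F \<and> (\<forall>C\<in>F. finite C \<and> card C \<le> 2)"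

definition cnf_models :: "('v \<times> bool) set set \<Rightarrow> ('v \<Rightarrow> bool) set" where
  "cnf_models F = {\<sigma>. \<forall>C\<in>F. sat_clause \<sigma> C}"

end

theory Submission
  imports Defs
begin

definition maj :: "bool \<Rightarrow> bool \<Rightarrow> bool \<Rightarrow> bool" where
  "maj a b c = ((a \<and> b) \<or> (a \<and> c) \<or> (b \<and> c))"

lemma agree_lemma:
  fixes S :: "('v::finite \<Rightarrow> bool) set"
  assumes closed: "\<forall>a\<in>S. \<forall>b\<in>S. \<forall>c\<in>S. (\<lambda>v. maj (a v) (b v) (c v)) \<in> S"
    and sig: "\<forall>C. card C \<le> 2 \<and> (\<forall>\<tau>\<in>S. sat_clause \<tau> C) \<longrightarrow> sat_clause \<sigma> C"
  shows "card W = n \<Longrightarrow> \<exists>\<tau>\<in>S. \<forall>x\<in>W. \<tau> x = \<sigma> x"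
proof (induction n arbitrary: W rule: less_induct)
  case (less n)
  show ?case
  proof (cases "n \<le> 2")
    case True
    show ?thesis
    proof (rule ccontr)
      assume na: "\<not> (\<exists>\<tau>\<in>S. \<forall>x\<in>W. \<tau> x = \<sigma> x)"
      define C where "C = (\<lambda>x. (x, \<not> \<sigma> x)) ` W"
      have "card C \<le> card W" unfolding C_def by (rule card_image_le) simp
      hence c2: "card C \<le> 2" using True less.prems by simp
      have "\<forall>\<tau>\<in>S. sat_clause \<tau> C"
        using na unfolding C_def sat_clause_def by auto
      hence "sat_clause \<sigma> C" using sig c2 by blast
      thus False unfolding C_def sat_clause_def by auto
    qed
  next
    case False
    have fW: "finite W" by simp
    have "W \<noteq> {}" using False less.prems by auto
    then obtain x1 where x1: "x1 \<in> W" by blast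
    have c1: "card (W - {x1}) = n - 1" using x1 less.prems by simp
    hence "card (W - {x1}) > 0" using False by linarith
    hence "W - {x1} \<noteq> {}" using card_gt_0_iff by blast
    then obtain x2 where x2: "x2 \<in> W" "x2 \<noteq> x1" by blast
    have "card (W - {x1} - {x2}) = n - 2" using x2 c1 by simp
    hence "card (W - {x1} - {x2}) > 0" using False by linarith
    hence "W - {x1} - {x2} \<noteq> {}" using card_gt_0_iff by blast
    then obtain x3 where x3: "x3 \<in> W" "x3 \<noteq> x1" "x3 \<noteq> x2" by blast
    have lt: "\<And>x. x \<in> W \<Longrightarrow> card (W - {x}) < n" using less.prems False
      by (simp add: card_Diff_singleton)
    obtain t1 where t1: "t1 \<in> S" "\<forall>x\<in>W - {x1}. t1 x = \<sigma> x"
      using less.IH[OF lt[OF x1] refl] by blast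
    obtain t2 where t2: "t2 \<in> S" "\<forall>x\<in>W - {x2}. t2 x = \<sigma> x"
      using less.IH[OF lt[OF x2(1)] refl] by blast
    obtain t3 where t3: "t3 \<in> S" "\<forall>x\<in>W - {x3}. t3 x = \<sigma> x"
      using less.IH[OF lt[OF x3(1)] refl] by blast
    have M: "(\<lambda>v. maj (t1 v) (t2 v) (t3 v)) \<in> S" using closed t1 t2 t3 by blast
    have AG: "\<forall>x\<in>W. maj (t1 x) (t2 x) (t3 x) = \<sigma> x"
    proof
      fix x assume "x \<in> W"
      thus "maj (t1 x) (t2 x) (t3 x) = \<sigma> x"
      proof (cases "x = x1")
        case True
        have "x \<in> W - {x2}" "x \<in> W - {x3}" using True \<open>x \<in> W\<close> x2(2) x3(2) by auto
        hence "t2 x = \<sigma> x" "t3 x = \<sigma> x" using t2(2) t3(2) by blast+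
        thus ?thesis by (cases "\<sigma> x") (simp_all add: maj_def)
      next
        case n1: False
        show ?thesis
        proof (cases "x = x2")
          case True
          have "x \<in> W - {x1}" "x \<in> W - {x3}" using True n1 \<open>x \<in> W\<close> x3(3) by auto
          hence "t1 x = \<sigma> x" "t3 x = \<sigma> x" using t1(2) t3(2) by blast+
          thus ?thesis by (cases "\<sigma> x") (simp_all add: maj_def)
        next
          case False
          have "x \<in> W - {x1}" "x \<in> W - {x2}" using False n1 \<open>x \<in> W\<close> by auto
          hence "t1 x = \<sigma> x" "t2 x = \<sigma> x" using t1(2) t2(2) by blast+
          thus ?thesis by (cases "\<sigma> x") (simp_all add: maj_def)
        qed
      qed
    qed
    show ?thesis
    proof (rule bexI[OF _ M])
      show "\<forall>x\<in>W. (\<lambda>v. maj (t1 v) (t2 v) (t3 v)) x = \<sigma> x" using AG by simp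
    qed
  qed
qed

lemma two_cnf_char:
  fixes S :: "('v::finite \<Rightarrow> bool) set"
  assumes closed: "\<forall>a\<in>S. \<forall>b\<in>S. \<forall>c\<in>S. (\<lambda>v. maj (a v) (b v) (c v)) \<in> S"
  shows "\<exists>F. is_2cnf F \<and> cnf_models F = S"
proof -
  define F where "F = {C :: ('v \<times> bool) set. card C \<le> 2 \<and> (\<forall>\<tau>\<in>S. sat_clause \<tau> C)}"
  have "is_2cnf F" unfolding is_2cnf_def F_def by auto
  moreover have "cnf_models F = S"
  proof
    show "S \<subseteq> cnf_models F" unfolding cnf_models_def F_def by auto
  next
    show "cnf_models F \<subseteq> S"
    proof
      fix \<sigma> assume "\<sigma> \<in> cnf_models F"
      hence sig: "\<forall>C. card C \<le> 2 \<and> (\<forall>\<tau>\<in>S. sat_clause \<tau> C) \<longrightarrow> sat_clause \<sigma> C"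
        unfolding cnf_models_def F_def by auto
      obtain \<tau> where "\<tau> \<in> S" "\<forall>x\<in>UNIV. \<tau> x = \<sigma> x"
        using agree_lemma[OF closed sig refl] by blast
      hence "\<tau> = \<sigma>" by auto
      thus "\<sigma> \<in> S" using \<open>\<tau> \<in> S\<close> by simp
    qed
  qed
  ultimately show ?thesis by blast
qed

lemma join_min:
  assumes bf: "bisubmodular f" and A: "A \<in> minimisers f" and B: "B \<in> minimisers f"
  shows "(\<lambda>v. tjoin (A v) (B v)) \<in> minimisers f"
proof -
  have "f A + f B \<ge> f (\<lambda>v. tmeet (A v) (B v)) + f (\<lambda>v. tjoin (A v) (B v))"
    using bf unfolding bisubmodular_def by blast
  moreover have "f A \<le> f (\<lambda>v. tmeet (A v) (B v))" using A unfolding minimisers_def by blast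
  ultimately have "f (\<lambda>v. tjoin (A v) (B v)) \<le> f B" by simp
  thus ?thesis using B unfolding minimisers_def using order_trans by blast
qed

lemma tri_maj:
  "tjoin (tjoin (tjoin (tri_of_bool a) (tri_of_bool b)) (tri_of_bool c))
         (tjoin (tjoin (tri_of_bool a) (tri_of_bool c)) (tri_of_bool b))
   = tri_of_bool (maj a b c)"
  by (cases a; cases b; cases c) (simp_all add: tri_of_bool_def maj_def)

theorem lemma23:
  fixes f :: "('v::finite \<Rightarrow> tri) \<Rightarrow> real"
  assumes "bisubmodular f"
  shows "\<exists>F. is_2cnf F \<and>
           cnf_models F = {\<sigma>. (\<lambda>v. tri_of_bool (\<sigma> v)) \<in> minimisers f}"
proof (rule two_cnf_char, intro ballI)
  fix a b c :: "'v \<Rightarrow> bool"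
  assume a: "a \<in> {\<sigma>. (\<lambda>v. tri_of_bool (\<sigma> v)) \<in> minimisers f}"
    and b: "b \<in> {\<sigma>. (\<lambda>v. tri_of_bool (\<sigma> v)) \<in> minimisers f}"
    and c: "c \<in> {\<sigma>. (\<lambda>v. tri_of_bool (\<sigma> v)) \<in> minimisers f}"
  let ?A = "\<lambda>v. tri_of_bool (a v)" and ?B = "\<lambda>v. tri_of_bool (b v)"
    and ?C = "\<lambda>v. tri_of_bool (c v)"
  have mA: "?A \<in> minimisers f" and mB: "?B \<in> minimisers f" and mC: "?C \<in> minimisers f"
    using a b c by auto
  have D: "(\<lambda>v. tjoin (tjoin (?A v) (?B v)) (?C v)) \<in> minimisers f"
    using join_min[OF assms join_min[OF assms mA mB] mC] by simp
  have E: "(\<lambda>v. tjoin (tjoin (?A v) (?C v)) (?B v)) \<in> minimisers f"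
    using join_min[OF assms join_min[OF assms mA mC] mB] by simp
  have "(\<lambda>v. tjoin (tjoin (tjoin (?A v) (?B v)) (?C v)) (tjoin (tjoin (?A v) (?C v)) (?B v)))
        \<in> minimisers f"
    using join_min[OF assms D E] by simp
  thus "(\<lambda>v. maj (a v) (b v) (c v)) \<in> {\<sigma>. (\<lambda>v. tri_of_bool (\<sigma> v)) \<in> minimisers f}"
    by (simp add: tri_maj)
qed

end
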